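(* Let $\alpha\in(0,1)$ be constant. Suppose $(p_a(t))_{a\in\mathcal A}$ satisfies $p_a(t)>0$ for all $a$ and $\sum_a p_a(t)=1$, and $(p_a(t+1))_{a\in\mathcal A}$ is obtained by one SAMBA update with learning rate $\alpha$. Then $p_a(t+1)>0$ for all $a\in\mathcal A$ and $\sum_a p_a(t+1)=1$.
   Context: One SAMBA update: $a_\star(t)$ is an arm maximizing $p_a(t)$, $p_\star(t)=p_{a_\star(t)}(t)$. Exactly one arm is played; $I_a(t)\in\{0,1\}$ indicates that arm $a$ is played, with $\sum_a I_a(t)=1$; rewards $R_a(t)\in\{0,1\}$; $I_\star(t)=I_{a_\star(t)}(t)$, $R_\star(t)=R_{a_\star(t)}(t)$. For $a\ne a_\star(t)$: $p_a(t+1)=p_a(t)+\alpha p_a(t)^2\big[\frac{I_a(t)R_a(t)}{p_a(t)}-\frac{I_\star(t)R_\star(t)}{p_\star(t)}\big]$, and $p_{a_\star(t)}(t+1)=1-\sum_{a\ne a_\star(t)}p_a(t+1)$. *)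

theory Defs
  imports Complex_Main
begin

text \<open>One SAMBA update. Arms form a finite set A; p is the current probability vector,
  astar the (chosen) arm maximizing p, I the play indicators and R the rewards.\<close>

definition samba_other :: "real \<Rightarrow> ('a \<Rightarrow> real) \<Rightarrow> 'a \<Rightarrow> ('a \<Rightarrow> real) \<Rightarrow> ('a \<Rightarrow> real) \<Rightarrow> 'a \<Rightarrow> real" where
  "samba_other \<alpha> p astar I R a =
     p a + \<alpha> * (p a)^2 * (I a * R a / p a - I astar * R astar / p astar)"

definition samba_update :: "real \<Rightarrow> 'a set \<Rightarrow> ('a \<Rightarrow> real) \<Rightarrow> 'a \<Rightarrow> ('a \<Rightarrow> real) \<Rightarrow> ('a \<Rightarrow> real) \<Rightarrow> 'a \<Rightarrow> real" where
  "samba_update \<alpha> A p astar I R a =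
     (if a = astar then 1 - (\<Sum>b\<in>A - {astar}. samba_other \<alpha> p astar I R b)
      else samba_other \<alpha> p astar I R a)"

end

theory Submission
  imports Defs
begin

theorem lemma21:
  fixes A :: "'a set" and p I R :: "'a \<Rightarrow> real" and astar :: 'a and \<alpha> :: real
  assumes "finite A"
    and "0 < \<alpha>" and "\<alpha> < 1"
    and "\<And>a. a \<in> A \<Longrightarrow> p a > 0"
    and "(\<Sum>a\<in>A. p a) = 1"
    and "astar \<in> A" and "\<And>a. a \<in> A \<Longrightarrow> p a \<le> p astar"
    and "\<And>a. a \<in> A \<Longrightarrow> I a \<in> {0, 1}"
    and "(\<Sum>a\<in>A. I a) = 1"
    and "\<And>a. a \<in> A \<Longrightarrow> R a \<in> {0, 1}"
  shows "(\<forall>a\<in>A. samba_update \<alpha> A p astar I R a > 0)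
         \<and> (\<Sum>a\<in>A. samba_update \<alpha> A p astar I R a) = 1"
proof
  let ?B = "A - {astar}"
  let ?c = "I astar * R astar / p astar"
  have ps: "p astar > 0" using assms(4,6) by auto
  have c0: "?c \<ge> 0" using assms(8,10)[OF assms(6)] ps by auto
  have oth: "samba_other \<alpha> p astar I R b = p b + \<alpha> * p b * I b * R b - \<alpha> * (p b)^2 * ?c"
    if "b \<in> A" for b
  proof -
    have "p b > 0" using assms(4) that by auto
    then show ?thesis unfolding samba_other_def by (simp add: field_simps power2_eq_square)
  qed
  have sumB: "(\<Sum>b\<in>?B. samba_other \<alpha> p astar I R b)
      = (\<Sum>b\<in>?B. p b) + \<alpha> * (\<Sum>b\<in>?B. p b * I b * R b) - \<alpha> * ?c * (\<Sum>b\<in>?B. (p b)^2)"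
    by (simp add: oth sum.distrib sum_subtractf sum_distrib_left sum_divide_distrib mult_ac)
  have pB: "(\<Sum>b\<in>?B. p b) = 1 - p astar"
    using sum.remove[OF assms(1,6), of p] assms(5) by simp
  have IB: "(\<Sum>b\<in>?B. I b) \<le> 1"
  proof -
    have "I astar \<ge> 0" using assms(8)[OF assms(6)] by auto
    then show ?thesis using sum.remove[OF assms(1,6), of I] assms(9) by simp
  qed
  have le: "(\<Sum>b\<in>?B. p b * I b * R b) \<le> (\<Sum>b\<in>?B. p astar * I b)"
  proof (rule sum_mono)
    fix b assume b: "b \<in> ?B"
    have "p b \<le> p astar" "p b > 0" using b assms(4,7) by auto
    moreover have "I b \<in> {0,1}" "R b \<in> {0,1}" using b assms(8,10) by auto
    ultimately show "p b * I b * R b \<le> p astar * I b" by auto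
  qed
  have le2: "(\<Sum>b\<in>?B. p b * I b * R b) \<le> p astar"
  proof -
    have "(\<Sum>b\<in>?B. p astar * I b) = p astar * (\<Sum>b\<in>?B. I b)" by (simp add: sum_distrib_left)
    also have "\<dots> \<le> p astar" using IB ps by (simp add: mult_left_le)
    finally show ?thesis using le by linarith
  qed
  have sq: "(\<Sum>b\<in>?B. (p b)^2) \<ge> 0" by (simp add: sum_nonneg)
  have star_pos: "samba_update \<alpha> A p astar I R astar > 0"
  proof -
    have "samba_update \<alpha> A p astar I R astar
       = p astar - \<alpha> * (\<Sum>b\<in>?B. p b * I b * R b) + \<alpha> * ?c * (\<Sum>b\<in>?B. (p b)^2)"
      unfolding samba_update_def using sumB pB by simp
    moreover have "\<alpha> * (\<Sum>b\<in>?B. p b * I b * R b) \<le> \<alpha> * p astar"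
      using le2 assms(2) by (simp add: mult_left_mono)
    moreover have "\<alpha> * ?c * (\<Sum>b\<in>?B. (p b)^2) \<ge> 0" using c0 sq assms(2) by (metis mult_nonneg_nonneg less_imp_le)
    moreover have "\<alpha> * p astar < p astar" using assms(3) ps by simp
    ultimately show ?thesis by linarith
  qed
  show "\<forall>a\<in>A. samba_update \<alpha> A p astar I R a > 0"
  proof
    fix a assume a: "a \<in> A"
    show "samba_update \<alpha> A p astar I R a > 0"
    proof (cases "a = astar")
      case True then show ?thesis using star_pos by simp
    next
      case False
      have pa: "p a > 0" "p a \<le> p astar" using a assms(4,7) by auto
      have "I a * R a \<ge> 0" using assms(8,10)[OF a] by auto
      hence t1: "\<alpha> * p a * I a * R a \<ge> 0" using pa assms(2) by (simp add: mult.assoc)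
      have "?c \<le> 1 / p astar" using assms(8,10)[OF assms(6)] ps by auto
      hence "(p a)^2 * ?c \<le> (p a)^2 * (1 / p astar)" by (rule mult_left_mono) simp
      also have "\<dots> = p a * (p a / p astar)" by (simp add: power2_eq_square)
      also have "\<dots> \<le> p a * 1" using pa ps by (intro mult_left_mono) auto
      finally have "\<alpha> * ((p a)^2 * ?c) \<le> \<alpha> * p a" using assms(2) by (intro mult_left_mono) auto
      moreover have "\<alpha> * p a < p a" using assms(3) pa by simp
      ultimately show ?thesis using False oth[OF a] t1 unfolding samba_update_def
        by (simp add: mult.assoc)
    qed
  qed
  show "(\<Sum>a\<in>A. samba_update \<alpha> A p astar I R a) = 1"
  proof -
    have "(\<Sum>a\<in>?B. samba_update \<alpha> A p astar I R a) = (\<Sum>b\<in>?B. samba_other \<alpha> p astar I R b)"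
      by (rule sum.cong) (auto simp: samba_update_def)
    then show ?thesis using sum.remove[OF assms(1,6), of "samba_update \<alpha> A p astar I R"]
      by (simp add: samba_update_def)
  qed
qed

end
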